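(* Let $s=1$, $d=2$ with basis $|+\rangle,|-\rangle$ and shift vectors $v_+=+1$, $v_-=-1$. For $r\in\mathbb R$ let $U_r=\begin{pmatrix}\cos r&\sin r\\\sin r&-\cos r\end{pmatrix}$. Fix $r_0\in\mathbb R$ and $\sigma>0$, and let $\nu$ be the law of $U_r$ when $r$ is distributed on $[r_0-\pi,r_0+\pi]$ with density $\frac1Ne^{-(r-r_0)^2/\sigma^2}$ ($N$ the normalizing constant). Then for the associated walk $\mathbf W$, $\mathbf W^2$ is strictly contractive on $\{\mathbb 1\}^\perp\subset\mathcal T$.
   Context: General setting: for a lattice dimension $s$, internal dimension $d$, shift vectors $v_1,\dots,v_d\in\mathbb Z^s$ and a Borel probability measure $\nu$ on $\mathcal U(d)$, put $\widetilde U=\int U\,\nu(dU)$, $T(B)=\int U^*BU\,\nu(dU)$. $\mathcal T$ denotes the Hilbert space of (a.e.-classes of) measurable functions $A:[0,2\pi)^s\to M_d(\mathbb C)$ with inner product $\langle A,B\rangle=(2\pi)^{-s}\int d^sp\,\frac1d\mathrm{tr}(A(p)^*B(p))$, norm $\|A\|=\langle A,A\rangle^{1/2}$ (momentum representation of translation-invariant operators on $\ell^2(\mathbb Z^s)\otimes\mathbb C^d$). $\mathbb 1$ is the constant identity function; $A_0=(2\pi)^{-s}\int A(p)d^sp$; $S(p)=\mathrm{diag}(e^{iv_1\cdot p},\dots,e^{iv_d\cdot p})$. The walk with shift $|x\otimes i\rangle\mapsto|x+v_i\otimes i\rangle$ and coins i.i.d. in space and time with law $\nu$ acts on $\mathcal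 T$ by $\mathbf W(A)(p)=S(p)^*\big[T(A_0)+\widetilde U^*(A(p)-A_0)\widetilde U\big]S(p)$. A bounded map $\mathbf V$ on $\mathcal T$ is strictly contractive on $\{\mathbb 1\}^\perp$ if there is $c<1$ with $\|\mathbf V(A)\|\le c\|A\|$ for all $A\in\mathcal T$ with $\langle\mathbb 1,A\rangle=0$. *)

theory Defs
  imports "HOL-Analysis.Analysis"
begin

text \<open>Matrices in M_d(C) are represented as complex^'d^'d (row index first).
  Momenta p range over the torus [0,2pi)^s, represented in real^'s.\<close>

definition adj :: "complex^'d^'d \<Rightarrow> complex^'d^'d" where
  "adj B = (\<chi> i j. cnj (B $ j $ i))"

definition mtrace :: "complex^'d^'d \<Rightarrow> complex" where
  "mtrace B = (\<Sum>i\<in>UNIV. B $ i $ i)"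

definition torus :: "(real^'s) set" where
  "torus = {p. \<forall>k. 0 \<le> p $ k \<and> p $ k < 2 * pi}"

definition Tspace :: "(real^'s \<Rightarrow> complex^'d^'d) set" where
  "Tspace = {A. set_borel_measurable lborel (torus :: (real^'s) set) A \<and>
                set_integrable lborel (torus :: (real^'s) set) (\<lambda>p. (norm (A p))\<^sup>2)}"

definition tinner :: "(real^'s \<Rightarrow> complex^'d^'d) \<Rightarrow> (real^'s \<Rightarrow> complex^'d^'d) \<Rightarrow> complex" where
  "tinner A B = (1 / (2 * pi) ^ CARD('s)) *
     (LINT p : (torus :: (real^'s) set) | lborel. (1 / of_nat CARD('d)) * mtrace (adj (A p) ** B p))"

definition tnorm :: "(real^'s \<Rightarrow> complex^'d^'d) \<Rightarrow> real" where
  "tnorm A = sqrt (Re (tinner A A))"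

definition one_T :: "real^'s \<Rightarrow> complex^'d^'d" where
  "one_T = (\<lambda>p. mat 1)"

definition A0 :: "(real^'s \<Rightarrow> complex^'d^'d) \<Rightarrow> complex^'d^'d" where
  "A0 A = (1 / (2 * pi) ^ CARD('s)) *\<^sub>R (LINT p : (torus :: (real^'s) set) | lborel. A p)"

definition Sop :: "('d \<Rightarrow> int^'s) \<Rightarrow> real^'s \<Rightarrow> complex^'d^'d" where
  "Sop v p = (\<chi> i j. if i = j then exp (\<i> * complex_of_real (\<Sum>k\<in>UNIV. of_int (v i $ k) * p $ k)) else 0)"

text \<open>Averaged coin and the channel T, for a Borel probability measure nu on matrices (supported on U(d)).\<close>
definition Utilde :: "(complex^'d^'d) measure \<Rightarrow> complex^'d^'d" where
  "Utilde nu = (\<integral>U. U \<partial>nu)"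

definition Tch :: "(complex^'d^'d) measure \<Rightarrow> complex^'d^'d \<Rightarrow> complex^'d^'d" where
  "Tch nu B = (\<integral>U. adj U ** B ** U \<partial>nu)"

definition walkW :: "(complex^'d^'d) measure \<Rightarrow> ('d \<Rightarrow> int^'s)
     \<Rightarrow> (real^'s \<Rightarrow> complex^'d^'d) \<Rightarrow> (real^'s \<Rightarrow> complex^'d^'d)" where
  "walkW nu v A = (\<lambda>p. adj (Sop v p) **
       (Tch nu (A0 A) + adj (Utilde nu) ** (A p - A0 A) ** Utilde nu) ** Sop v p)"

definition strictly_contractive_perp ::
  "((real^'s \<Rightarrow> complex^'d^'d) \<Rightarrow> (real^'s \<Rightarrow> complex^'d^'d)) \<Rightarrow> bool" where
  "strictly_contractive_perp V \<longleftrightarrow>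
     (\<exists>c < 1. \<forall>A \<in> Tspace. tinner one_T A = 0 \<longrightarrow> tnorm (V A) \<le> c * tnorm A)"

datatype pm = Pl | Mi

lemma UNIV_pm: "UNIV = {Pl, Mi}"
  using pm.exhaust by auto

instance pm :: finite
  by standard (simp add: UNIV_pm)

definition vpm :: "pm \<Rightarrow> int^1" where
  "vpm i = (\<chi> k. if i = Pl then 1 else -1)"

definition Ur :: "real \<Rightarrow> complex^pm^pm" where
  "Ur r = (\<chi> i j. if i = Pl \<and> j = Pl then complex_of_real (cos r)
                 else if i = Mi \<and> j = Mi then complex_of_real (- cos r)
                 else complex_of_real (sin r))"

definition gauss_N :: "real \<Rightarrow> real \<Rightarrow> real" where
  "gauss_N r0 \<sigma> = (LBINT r = r0 - pi..r0 + pi. exp (- (r - r0)\<^sup>2 / \<sigma>\<^sup>2))"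

definition gauss_density :: "real \<Rightarrow> real \<Rightarrow> real \<Rightarrow> real" where
  "gauss_density r0 \<sigma> r =
     indicator {r0 - pi..r0 + pi} r * exp (- (r - r0)\<^sup>2 / \<sigma>\<^sup>2) / gauss_N r0 \<sigma>"

definition nu_gauss :: "real \<Rightarrow> real \<Rightarrow> (complex^pm^pm) measure" where
  "nu_gauss r0 \<sigma> =
     distr (density lborel (\<lambda>r. ennreal (gauss_density r0 \<sigma> r))) borel Ur"

end

theory Submission
  imports Defs
begin


lemma sum_pm: "(\<Sum>i\<in>(UNIV::pm set). f i) = f Pl + f Mi"
  by (simp add: UNIV_pm)

lemma card_pm: "CARD(pm) = 2"
  by (simp add: UNIV_pm)

definition msc :: "complex \<Rightarrow> complex^'d^'d \<Rightarrow> complex^'d^'d" where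
  "msc c A = (\<chi> i j. c * A$i$j)"

lemma mat_right: "(A::complex^'d^'d) ** mat c = msc c A"
  by (simp add: vec_eq_iff matrix_matrix_mult_def mat_def msc_def if_distrib mult.commute cong: if_cong)

lemma mat_left: "mat c ** (A::complex^'d^'d) = msc c A"
proof -
  have "\<And>i j. (\<Sum>k\<in>UNIV. (mat c :: complex^'d^'d)$i$k * A$k$j) = c * A$i$j"
    by (simp add: mat_def if_distrib[where f="\<lambda>x. x * _"] cong: if_cong)
  then show ?thesis by (simp add: vec_eq_iff matrix_matrix_mult_def msc_def)
qed

lemma msc_left: "msc c A ** (B::complex^'d^'d) = msc c (A ** B)"
  by (simp add: vec_eq_iff matrix_matrix_mult_def msc_def sum_distrib_left mult.assoc)

lemma msc_right: "(A::complex^'d^'d) ** msc c B = msc c (A ** B)"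
  by (simp add: vec_eq_iff matrix_matrix_mult_def msc_def sum_distrib_left mult.assoc mult.left_commute)

lemma trace_msc: "mtrace (msc c A) = c * mtrace A"
  by (simp add: mtrace_def msc_def sum_distrib_left)

lemma adj_mult: "adj ((A::complex^'d^'d) ** B) = adj B ** adj A"
  by (simp add: vec_eq_iff adj_def matrix_matrix_mult_def mult.commute)

lemma adj_adj[simp]: "adj (adj A) = A"
  by (simp add: vec_eq_iff adj_def)

lemma adj_mat1[simp]: "adj (mat 1) = mat 1"
  by (simp add: vec_eq_iff adj_def mat_def)

lemma mtrace_comm: "mtrace ((A::complex^'d^'d) ** B) = mtrace (B ** A)"
  using trace_mul_sym[of A B] by (simp add: mtrace_def trace_def)

lemma norm_sq_sum: "(norm (X::complex^'d^'d))^2 = (\<Sum>i\<in>UNIV. \<Sum>j\<in>UNIV. (cmod (X$i$j))^2)"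
  by (simp add: norm_vec_def L2_set_def sum_nonneg)

lemma norm_sq_pm: "(norm (X::complex^pm^pm))^2 = (cmod (X$Pl$Pl))^2 + (cmod (X$Pl$Mi))^2 + (cmod (X$Mi$Pl))^2 + (cmod (X$Mi$Mi))^2"
  by (simp add: norm_sq_sum sum_pm)

lemma cnj_sq: "z * cnj z = (complex_of_real (cmod z))^2"
  using complex_norm_square[of z] by simp

lemma trace_adj_self: "mtrace (adj X ** (X::complex^'d^'d)) = of_real ((norm X)^2)"
proof -
  have "mtrace (adj X ** X) = (\<Sum>i\<in>UNIV. \<Sum>k\<in>UNIV. of_real ((cmod (X$k$i))^2))"
    using cnj_sq by (simp add: mtrace_def adj_def matrix_matrix_mult_def mult.commute)
  also have "\<dots> = of_real (\<Sum>i\<in>UNIV. \<Sum>j\<in>UNIV. (cmod (X$j$i))^2)" by simp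
  also have "(\<Sum>i\<in>UNIV. \<Sum>j\<in>UNIV. (cmod (X$j$i))^2) = (\<Sum>i\<in>UNIV. \<Sum>j\<in>UNIV. (cmod (X$i$j))^2)"
    by (rule sum.swap)
  finally show ?thesis by (simp add: norm_sq_sum)
qed

lemma norm_conj:
  assumes "U ** adj U = mat (of_real k)"
  shows "(norm (adj U ** X ** (U::complex^'d^'d)))^2 = k^2 * (norm X)^2"
proof -
  let ?Y = "adj U ** X ** U"
  have "adj ?Y ** ?Y = adj U ** adj X ** (U ** adj U) ** X ** U"
    by (simp add: adj_mult matrix_mul_assoc)
  also have "\<dots> = msc (of_real k) (adj U ** (adj X ** X) ** U)"
    by (simp add: assms mat_right msc_left msc_right matrix_mul_assoc)
  finally have "mtrace (adj ?Y ** ?Y) = of_real k * mtrace (adj U ** ((adj X ** X) ** U))"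
    by (simp add: trace_msc matrix_mul_assoc)
  also have "mtrace (adj U ** ((adj X ** X) ** U)) = mtrace (adj X ** X ** (U ** adj U))"
    using mtrace_comm[of "adj U" "adj X ** X ** U"] by (simp add: matrix_mul_assoc)
  also have "\<dots> = of_real k * mtrace (adj X ** X)"
    by (simp add: assms mat_right trace_msc)
  finally have "of_real ((norm ?Y)^2) = (of_real (k^2 * (norm X)^2) :: complex)"
    by (simp add: trace_adj_self power2_eq_square)
  then show ?thesis using of_real_eq_iff by blast
qed

lemma norm_conj1:
  assumes "U ** adj U = mat 1"
  shows "norm (adj U ** X ** (U::complex^'d^'d)) = norm X"
  using norm_conj[of U 1 X] assms by (simp add: power2_eq_iff_nonneg)

lemma cont_mult: "continuous_on UNIV (\<lambda>x. fst x ** (snd x :: complex^'d^'d))"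
  unfolding matrix_matrix_mult_def
  by (intro continuous_intros)

lemma meas_mult[measurable]:
  "f \<in> borel_measurable M \<Longrightarrow> g \<in> borel_measurable M \<Longrightarrow> (\<lambda>x. f x ** (g x :: complex^'d^'d)) \<in> borel_measurable M"
  by (rule borel_measurable_continuous_Pair[OF _ _ cont_mult])

lemma cont_adj: "continuous_on UNIV (adj :: complex^'d^'d \<Rightarrow> _)"
  unfolding adj_def by (intro continuous_intros)

lemma meas_adj[measurable]:
  "f \<in> borel_measurable M \<Longrightarrow> (\<lambda>x. adj (f x :: complex^'d^'d)) \<in> borel_measurable M"
  by (rule borel_measurable_continuous_on[OF cont_adj])

lemma bl_entry: "bounded_linear (\<lambda>X::complex^'d^'d. X$i$j)"
  by (rule bounded_linear_compose[OF bounded_linear_vec_nth bounded_linear_vec_nth])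

lemma bl_mtrace: "bounded_linear (mtrace :: complex^'d^'d \<Rightarrow> complex)"
  unfolding mtrace_def by (intro bounded_linear_sum bl_entry)

lemma mult_scaleR_right: "(A::complex^'d^'d) ** (r *\<^sub>R X) = r *\<^sub>R (A ** X)"
  by (simp add: vec_eq_iff matrix_matrix_mult_def scaleR_sum_right)

lemma mult_scaleR_left: "(r *\<^sub>R X) ** (A::complex^'d^'d) = r *\<^sub>R (X ** A)"
  by (simp add: vec_eq_iff matrix_matrix_mult_def scaleR_sum_right)

lemma matrix_add_rdistrib: "((A::complex^'d^'d) + B) ** C = A ** C + B ** C"
  by (simp add: vec_eq_iff matrix_matrix_mult_def distrib_right sum.distrib)

lemma matrix_diff_ldistrib: "(A::complex^'d^'d) ** (B - C) = A ** B - A ** C"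
  by (simp add: vec_eq_iff matrix_matrix_mult_def right_diff_distrib sum_subtractf)

lemma matrix_diff_rdistrib: "((A::complex^'d^'d) - B) ** C = A ** C - B ** C"
  by (simp add: vec_eq_iff matrix_matrix_mult_def left_diff_distrib sum_subtractf)

lemma bl_conj: "bounded_linear (\<lambda>X::complex^'d^'d. (A::complex^'d^'d) ** X ** (B::complex^'d^'d))"
  unfolding linear_conv_bounded_linear[symmetric]
  by (rule linearI) (simp_all add: matrix_add_ldistrib matrix_add_rdistrib mult_scaleR_right mult_scaleR_left)

lemma integral_entry:
  "integrable M f \<Longrightarrow> (integral\<^sup>L M f) $ i $ j = integral\<^sup>L M (\<lambda>x. (f x :: complex^'d^'d) $ i $ j)"
  using integral_bounded_linear[OF bl_entry, of M f i j] by simp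


lemma torus_eq: "(torus :: (real^1) set) = {p. 0 \<le> p$1 \<and> p$1 < 2*pi}"
  by (simp add: torus_def forall_1)

lemma torus_sets: "(torus :: (real^1) set) \<in> sets lborel"
proof -
  have "{p::real^1. 0 \<le> p$1} \<in> sets borel"
    by (intro borel_closed closed_Collect_le continuous_intros)
  moreover have "{p::real^1. p$1 < 2*pi} \<in> sets borel"
    by (intro borel_open open_Collect_less continuous_intros)
  ultimately have "{p::real^1. 0 \<le> p$1} \<inter> {p::real^1. p$1 < 2*pi} \<in> sets borel" by auto
  then show ?thesis by (simp add: torus_eq Collect_conj_eq)
qed

lemma emeasure_torus: "emeasure lborel (torus :: (real^1) set) = ennreal (2*pi)"
proof -
  have b: "emeasure lborel (box (vec 0) (vec (2*pi)) :: (real^1) set) = ennreal (2*pi)"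
    by (simp add: emeasure_lborel_box_eq Basis_vec_def inner_axis)
  have c: "emeasure lborel (cbox (vec 0) (vec (2*pi)) :: (real^1) set) = ennreal (2*pi)"
    by (simp add: emeasure_lborel_cbox_eq Basis_vec_def inner_axis)
  have "box (vec 0) (vec (2*pi)) \<subseteq> (torus :: (real^1) set)"
    by (auto simp: torus_eq mem_box_cart)
  then have "emeasure lborel (box (vec 0) (vec (2*pi)) :: (real^1) set) \<le> emeasure lborel (torus :: (real^1) set)"
    by (intro emeasure_mono torus_sets)
  moreover have "(torus :: (real^1) set) \<subseteq> cbox (vec 0) (vec (2*pi))"
    by (auto simp: torus_eq mem_box_cart)
  then have "emeasure lborel (torus :: (real^1) set) \<le> emeasure lborel (cbox (vec 0) (vec (2*pi)) :: (real^1) set)"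
    by (intro emeasure_mono) auto
  ultimately show ?thesis using b c by auto
qed

abbreviation tor :: "(real^1) set" where "tor \<equiv> torus"

definition MT :: "(real^1) measure" where "MT = restrict_space lborel tor"

lemma space_MT[simp]: "space MT = tor" by (simp add: MT_def space_restrict_space)
lemma sets_MT_tor: "tor \<inter> space lborel \<in> sets lborel" using torus_sets by simp

lemma emeasure_MT: "emeasure MT tor = ennreal (2*pi)"
proof -
  have "emeasure MT tor = emeasure lborel tor" unfolding MT_def
    by (rule emeasure_restrict_space[OF sets_MT_tor]) simp
  then show ?thesis by (simp add: emeasure_torus)
qed

lemma measure_MT: "measure MT tor = 2*pi"
  by (simp add: measure_def emeasure_MT)

interpretation MTf: finite_measure MT
  by (rule finite_measureI) (simp add: emeasure_MT)

lemma integral_MT: "integral\<^sup>L MT (f :: real^1 \<Rightarrow> 'b::{banach, second_countable_topology}) = (LINT p:tor|lborel. f p)"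
  by (simp add: MT_def integral_restrict_space[OF sets_MT_tor] set_lebesgue_integral_def)

lemma integrable_MT: "integrable MT (f :: real^1 \<Rightarrow> 'b::{banach, second_countable_topology}) \<longleftrightarrow> set_integrable lborel tor f"
  by (simp add: MT_def integrable_restrict_space[OF sets_MT_tor] set_integrable_def)

lemma measurable_MT: "(f :: real^1 \<Rightarrow> 'b::{banach, second_countable_topology}) \<in> borel_measurable MT \<longleftrightarrow> set_borel_measurable lborel tor f"
  by (simp add: MT_def borel_measurable_restrict_space_iff[OF sets_MT_tor] set_borel_measurable_def)

lemma cont_meas_MT: "continuous_on UNIV f \<Longrightarrow> f \<in> borel_measurable MT"
  unfolding MT_def
  by (intro measurable_restrict_space1) (simp add: borel_measurable_continuous_onI)

lemma fourier0:
  assumes k: "k = 2 \<or> k = -2"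
  shows "integral\<^sup>L MT (\<lambda>p::real^1. exp (\<i> * complex_of_real (k * p$1))) = 0"
proof -
  let ?f = "\<lambda>p::real^1. exp (\<i> * complex_of_real (k * p$1))"
  have cf: "continuous_on UNIV ?f" by (intro continuous_intros)
  have meas: "?f \<in> borel_measurable MT" by (rule cont_meas_MT[OF cf])
  have "integrable MT ?f"
    apply (rule MTf.integrable_const_bound[where B=1])
     apply (simp add: norm_exp_i_times)
    by (rule meas)
  then have si: "set_integrable lborel tor ?f" by (simp add: integrable_MT)
  have "integral\<^sup>L MT ?f = integral tor ?f"
    using set_borel_integral_eq_integral(2)[OF si] by (simp add: integral_MT)
  also have "\<dots> = integral ((\<lambda>x. x $ 1) ` tor) (?f \<circ> vec)" by (rule integral_vec1_eq)
  also have "(\<lambda>x::real^1. x $ 1) ` tor = {0..<2*pi}"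
    by (force simp: torus_eq image_iff intro: exI[where x="vec _"])
  also have "integral {0..<2*pi} (?f \<circ> vec) = integral {0..2*pi} (?f \<circ> vec)"
    by (rule integral_spike_set) (auto intro: negligible_subset[of "{2*pi}"])
  also have "\<dots> = 0"
  proof -
    let ?G = "\<lambda>z::complex. exp (\<i> * of_real k * z) / (\<i> * of_real k)"
    let ?F = "\<lambda>x::real. ?G (of_real x)"
    have kne: "k \<noteq> 0" using k by auto
    have "((?f \<circ> vec) has_integral (?F (2*pi) - ?F 0)) {0..2*pi}"
    proof (rule fundamental_theorem_of_calculus)
      fix x :: real
      have "(?G has_field_derivative exp (\<i> * of_real k * of_real x)) (at (of_real x))"
        using kne by (auto intro!: derivative_eq_intros simp: field_simps)
      then have "(?F has_vector_derivative exp (\<i> * of_real k * of_real x)) (at x within {0..2*pi})"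
        by (rule has_vector_derivative_real_field)
      then show "(?F has_vector_derivative (?f \<circ> vec) x) (at x within {0..2*pi})"
        by (simp add: mult.assoc)
    qed simp
    moreover have "?F (2*pi) = ?F 0"
      using k by (auto simp: exp_eq_1 mult.commute mult.left_commute) (metis of_int_minus of_int_numeral)
    ultimately show ?thesis by (simp add: integral_unique)
  qed
  finally show ?thesis .
qed


type_synonym mfun = "real^1 \<Rightarrow> complex^pm^pm"

definition L2 :: "mfun \<Rightarrow> bool" where
  "L2 A \<longleftrightarrow> A \<in> borel_measurable MT \<and> integrable MT (\<lambda>p. (norm (A p))^2)"

definition NN :: "mfun \<Rightarrow> real" where
  "NN A = integral\<^sup>L MT (\<lambda>p. (norm (A p))^2)"

lemma le_one_plus_sq: "(x::real) \<ge> 0 \<Longrightarrow> x \<le> 1 + x^2"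
proof -
  assume "x \<ge> 0"
  have "0 \<le> (x - 1)^2" by simp
  then show ?thesis using \<open>x \<ge> 0\<close> by (simp add: power2_eq_square algebra_simps)
qed

lemma L2_int: assumes "L2 A" shows "integrable MT A"
proof -
  have i: "integrable MT (\<lambda>p. 1 + (norm (A p))^2)" using assms by (simp add: L2_def)
  show ?thesis
    by (rule Bochner_Integration.integrable_bound[OF i]) (use assms in \<open>auto simp: L2_def le_one_plus_sq\<close>)
qed

lemma NN_nonneg: "NN A \<ge> 0"
  unfolding NN_def by (rule integral_nonneg_AE) simp

lemma Tspace_L2: "A \<in> (Tspace :: mfun set) \<Longrightarrow> L2 A"
  by (simp add: Tspace_def L2_def measurable_MT integrable_MT)

lemma A0_eq: "A0 (A::mfun) = (1/(2*pi)) *\<^sub>R integral\<^sup>L MT A"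
  by (simp add: A0_def integral_MT)

lemma tnorm_eq: "tnorm (A::mfun) = sqrt (NN A / (4*pi))"
proof -
  have "tinner A A = (1/(2*pi)) * integral\<^sup>L MT (\<lambda>p. (1/2) * complex_of_real ((norm (A p))^2))"
    unfolding tinner_def integral_MT[symmetric] by (simp add: card_pm trace_adj_self del: of_real_power)
  also have "\<dots> = complex_of_real (NN A / (4*pi))"
    by (simp add: NN_def del: of_real_power)
  finally show ?thesis by (simp add: tnorm_def)
qed

lemma perp_trace: assumes "L2 A" "tinner one_T A = 0" shows "mtrace (A0 (A::mfun)) = 0"
proof -
  have "tinner one_T A = (1/(2*pi)) * integral\<^sup>L MT (\<lambda>p. (1/2) * mtrace (A p))"
    unfolding tinner_def integral_MT[symmetric] by (simp add: card_pm one_T_def)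
  also have "integral\<^sup>L MT (\<lambda>p. (1/2) * mtrace (A p)) = (1/2) * mtrace (integral\<^sup>L MT A)"
    using integral_bounded_linear[OF bl_mtrace L2_int[OF assms(1)]] by simp
  finally have "mtrace (integral\<^sup>L MT A) = 0" using assms(2) by simp
  moreover have "mtrace (c *\<^sub>R X) = c *\<^sub>R mtrace (X::complex^pm^pm)" for c X
    by (simp add: mtrace_def scaleR_sum_right)
  ultimately show ?thesis by (simp add: A0_eq)
qed

lemma norm_add_sq: "(norm (x + y :: 'a::real_inner))^2 = (norm x)^2 + 2 * (x \<bullet> y) + (norm y)^2"
  by (simp add: power2_norm_eq_inner inner_add inner_commute)

lemma pyth:
  assumes Y: "L2 Y" and z: "integral\<^sup>L MT Y = 0"
  shows "L2 (\<lambda>p. K + Y p)" "NN (\<lambda>p. K + Y p) = 2*pi*(norm K)^2 + NN Y"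
proof -
  have iY: "integrable MT Y" by (rule L2_int[OF Y])
  have i2: "integrable MT (\<lambda>p. (norm (Y p))^2)" using Y by (simp add: L2_def)
  have eq: "(\<lambda>p. (norm (K + Y p))^2) = (\<lambda>p. (norm K)^2 + (2 * (K \<bullet> Y p) + (norm (Y p))^2))"
    by (simp add: norm_add_sq add.assoc)
  have iin: "integrable MT (\<lambda>p. 2 * (K \<bullet> Y p))" using iY by simp
  show "L2 (\<lambda>p. K + Y p)"
    unfolding L2_def eq using Y iin i2 by (auto simp: L2_def)
  have "NN (\<lambda>p. K + Y p) = integral\<^sup>L MT (\<lambda>p. (norm K)^2) + (integral\<^sup>L MT (\<lambda>p. 2 * (K \<bullet> Y p)) + NN Y)"
    unfolding NN_def eq using iin i2 by (simp add: integral_add)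
  also have "integral\<^sup>L MT (\<lambda>p. 2 * (K \<bullet> Y p)) = 0" using iY z by simp
  also have "integral\<^sup>L MT (\<lambda>p. (norm K)^2) = 2*pi*(norm K)^2" by (simp add: measure_MT)
  finally show "NN (\<lambda>p. K + Y p) = 2*pi*(norm K)^2 + NN Y" by simp
qed

lemma mean_split:
  assumes A: "L2 A"
  shows "L2 (\<lambda>p. A p - A0 A)" "integral\<^sup>L MT (\<lambda>p. A p - A0 A) = 0"
        "NN A = 2*pi*(norm (A0 A))^2 + NN (\<lambda>p. A p - A0 A)"
proof -
  let ?m = "A0 A"
  have iA: "integrable MT A" by (rule L2_int[OF A])
  have eq: "(\<lambda>p. (norm (A p - ?m))^2) = (\<lambda>p. (norm (A p))^2 + (- 2 * (?m \<bullet> A p) + (norm ?m)^2))"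
  proof
    fix p
    show "(norm (A p - ?m))^2 = (norm (A p))^2 + (- 2 * (?m \<bullet> A p) + (norm ?m)^2)"
      using norm_add_sq[of "A p" "- ?m"] by (simp add: inner_commute)
  qed
  show L: "L2 (\<lambda>p. A p - ?m)"
    unfolding L2_def eq using A iA by (auto simp: L2_def)
  show z: "integral\<^sup>L MT (\<lambda>p. A p - ?m) = 0"
    using iA by (simp add: measure_MT A0_eq)
  have "NN (\<lambda>p. ?m + (A p - ?m)) = 2*pi*(norm ?m)^2 + NN (\<lambda>p. A p - ?m)"
    by (rule pyth(2)[OF L z])
  then show "NN A = 2*pi*(norm (A0 A))^2 + NN (\<lambda>p. A p - A0 A)" by simp
qed

lemma jensen: "L2 A \<Longrightarrow> 2*pi*(norm (A0 A))^2 \<le> NN A"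
  using mean_split(3)[of A] NN_nonneg[of "\<lambda>p. A p - A0 A"] by linarith


definition sv :: "pm \<Rightarrow> real" where "sv i = (if i = Pl then 1 else -1)"
definition ee :: "pm \<Rightarrow> real^1 \<Rightarrow> complex" where "ee i p = exp (\<i> * of_real (sv i * p$1))"

lemma Sop_nth: "Sop vpm p $ i $ j = (if i = j then ee i p else 0)"
  by (simp add: Sop_def sum_1 vpm_def ee_def sv_def)

lemma ee_cnj: "cnj (ee i p) * ee i p = 1"
  using cnj_sq[of "ee i p"] by (simp add: ee_def mult.commute)

lemma S_unit: "Sop vpm p ** adj (Sop vpm p) = mat 1"
proof -
  have "ee i p * cnj (ee i p) = 1" for i using ee_cnj[of i p] by (simp add: mult.commute)
  then show ?thesis
    by (simp add: vec_eq_iff matrix_matrix_mult_def sum_pm adj_def Sop_nth mat_def) (metis pm.exhaust)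
qed

lemma conjS_nth: "(adj (Sop vpm p) ** X ** Sop vpm p) $ i $ j = cnj (ee i p) * X$i$j * ee j p"
  by (cases i; cases j) (simp_all add: matrix_matrix_mult_def sum_pm adj_def Sop_nth)

lemma cont_S: "continuous_on UNIV (Sop vpm :: real^1 \<Rightarrow> complex^pm^pm)"
  unfolding Sop_def
proof (intro continuous_on_vec_lambda)
  fix i j :: pm
  show "continuous_on UNIV (\<lambda>x::real^1. if i = j then exp (\<i> * complex_of_real (\<Sum>k\<in>UNIV. real_of_int (vpm i $ k) * x $ k)) else 0)"
    by (cases "i = j") (simp_all add: continuous_intros)
qed

lemma meas_S[measurable]: "Sop vpm \<in> borel_measurable MT"
  by (rule cont_meas_MT[OF cont_S])

locale whyp =
  fixes nu :: "(complex^pm^pm) measure" and \<rho> \<mu> :: real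
  assumes U1: "Utilde nu ** adj (Utilde nu) = mat (of_real \<rho>)"
    and rho: "0 \<le> \<rho>" "\<rho> < 1"
    and Tn: "\<And>X. norm (Tch nu X) \<le> norm X"
    and Td: "\<And>X. mtrace X = 0 \<Longrightarrow> (cmod (Tch nu X $Pl$Pl))^2 + (cmod (Tch nu X $Mi$Mi))^2 \<le> \<mu> * (norm X)^2"
    and mu: "0 \<le> \<mu>" "\<mu> < 1"
begin

abbreviation W :: "mfun \<Rightarrow> mfun" where "W \<equiv> walkW nu vpm"

lemma Y_facts:
  assumes D: "L2 D" "integral\<^sup>L MT D = 0"
  shows "L2 (\<lambda>p. adj (Utilde nu) ** D p ** Utilde nu)"
    "integral\<^sup>L MT (\<lambda>p. adj (Utilde nu) ** D p ** Utilde nu) = 0"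
    "NN (\<lambda>p. adj (Utilde nu) ** D p ** Utilde nu) = \<rho>^2 * NN D"
proof -
  let ?U = "Utilde nu"
  have n: "(norm (adj ?U ** D p ** ?U))^2 = \<rho>^2 * (norm (D p))^2" for p
    by (rule norm_conj[OF U1])
  have mD: "D \<in> borel_measurable MT" and iD: "integrable MT (\<lambda>p. (norm (D p))^2)"
    using D by (auto simp: L2_def)
  show "L2 (\<lambda>p. adj ?U ** D p ** ?U)"
    unfolding L2_def n using mD iD by auto
  show "NN (\<lambda>p. adj ?U ** D p ** ?U) = \<rho>^2 * NN D"
    unfolding NN_def n by simp
  show "integral\<^sup>L MT (\<lambda>p. adj ?U ** D p ** ?U) = 0"
    using integral_bounded_linear[OF bl_conj L2_int[OF D(1)], of "adj ?U" ?U] D(2) by simp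
qed

lemma conjS_facts:
  assumes Y: "L2 Y"
  shows "L2 (\<lambda>p. adj (Sop vpm p) ** Y p ** Sop vpm p)" "NN (\<lambda>p. adj (Sop vpm p) ** Y p ** Sop vpm p) = NN Y"
proof -
  have n: "norm (adj (Sop vpm p) ** Y p ** Sop vpm p) = norm (Y p)" for p
    by (rule norm_conj1[OF S_unit])
  show "L2 (\<lambda>p. adj (Sop vpm p) ** Y p ** Sop vpm p)"
    using Y unfolding L2_def n by auto
  show "NN (\<lambda>p. adj (Sop vpm p) ** Y p ** Sop vpm p) = NN Y"
    unfolding NN_def n ..
qed

lemma wstep:
  assumes A: "L2 A"
  shows "L2 (W A)" "NN (W A) = 2*pi*(norm (Tch nu (A0 A)))^2 + \<rho>^2 * NN (\<lambda>p. A p - A0 A)"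
proof -
  let ?U = "Utilde nu" and ?m = "A0 A" and ?K = "Tch nu (A0 A)"
  let ?Y = "\<lambda>p. adj ?U ** (A p - ?m) ** ?U"
  note D = mean_split[OF A]
  note Yf = Y_facts[OF D(1) D(2)]
  note P = pyth[OF Yf(1) Yf(2), of ?K]
  have WA: "W A = (\<lambda>p. adj (Sop vpm p) ** (?K + ?Y p) ** Sop vpm p)"
    by (simp add: walkW_def)
  note Sf = conjS_facts[OF P(1)]
  show "L2 (W A)" unfolding WA by (rule Sf(1))
  show "NN (W A) = 2*pi*(norm ?K)^2 + \<rho>^2 * NN (\<lambda>p. A p - ?m)"
    unfolding WA Sf(2) P(2) Yf(3) ..
qed

end


lemma ee_prod: "cnj (ee i p) * ee j p = exp (\<i> * complex_of_real ((sv j - sv i) * p$1))"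
  by (simp add: ee_def exp_cnj exp_add[symmetric] algebra_simps)

lemma ee_cont: "continuous_on UNIV (\<lambda>p::real^1. cnj (ee i p) * ee j p)"
  unfolding ee_prod by (intro continuous_intros)

lemma ee_int: "integrable MT (\<lambda>p. cnj (ee i p) * ee j p)"
  apply (rule MTf.integrable_const_bound[where B=1])
   apply (simp add: ee_def norm_mult)
  by (rule cont_meas_MT[OF ee_cont])

lemma ee_off: "i \<noteq> j \<Longrightarrow> integral\<^sup>L MT (\<lambda>p. cnj (ee i p) * ee j p) = 0"
  unfolding ee_prod
  by (rule fourier0) (cases i; cases j; simp add: sv_def)

context whyp begin

lemma Cbound:
  assumes A: "L2 A" and tr: "mtrace (A0 A) = 0"
  shows "2*pi*(norm (A0 (W A)))^2 \<le> 2*pi*\<mu>*(norm (A0 A))^2 + \<rho>^2 * NN (\<lambda>p. A p - A0 A)"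
proof -
  let ?U = "Utilde nu" and ?m = "A0 A" and ?K = "Tch nu (A0 A)"
  let ?Y = "\<lambda>p. adj ?U ** (A p - ?m) ** ?U"
  let ?Z = "\<lambda>p. adj (Sop vpm p) ** ?Y p ** Sop vpm p"
  let ?G = "W A"
  note D = mean_split[OF A]
  note Yf = Y_facts[OF D(1) D(2)]
  note Zf = conjS_facts[OF Yf(1)]
  have iY: "integrable MT ?Y" by (rule L2_int[OF Yf(1)])
  have iZ: "integrable MT ?Z" by (rule L2_int[OF Zf(1)])
  have iG: "integrable MT ?G" by (rule L2_int[OF wstep(1)[OF A]])
  have Gent: "?G p $ i $ j = (cnj (ee i p) * ee j p) * ?K$i$j + ?Z p $ i $ j" for p i j
    by (simp add: walkW_def conjS_nth algebra_simps)
  have iYe: "integrable MT (\<lambda>p. ?Y p $ i $ j)" for i j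
    by (rule integrable_bounded_linear[OF bl_entry iY])
  have iZe: "integrable MT (\<lambda>p. ?Z p $ i $ j)" for i j
    by (rule integrable_bounded_linear[OF bl_entry iZ])
  have iee: "integrable MT (\<lambda>p. (cnj (ee i p) * ee j p) * ?K$i$j)" for i j
    using ee_int[of i j] by simp
  have intG: "integral\<^sup>L MT (\<lambda>p. ?G p $ i $ j) = ?K$i$j * integral\<^sup>L MT (\<lambda>p. cnj (ee i p) * ee j p) + (integral\<^sup>L MT ?Z)$i$j" for i j
    unfolding Gent using iee iZe by (simp add: integral_add integral_entry[OF iZ] mult.commute)
  have Zdiag: "?Z p $ i $ i = ?Y p $ i $ i" for p i
    using ee_cnj[of i p] by (simp add: conjS_nth algebra_simps)
  have intZd: "(integral\<^sup>L MT ?Z)$i$i = 0" for i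
    using Yf(2) by (simp add: integral_entry[OF iZ] Zdiag integral_entry[OF iY, symmetric])
  have diag: "A0 ?G $ i $ i = ?K $ i $ i" for i
  proof -
    have "integral\<^sup>L MT (\<lambda>p. cnj (ee i p) * ee i p) = 2*pi"
      using ee_cnj[of i] by (simp add: measure_MT scaleR_conv_of_real)
    then show ?thesis
      by (simp add: A0_eq[of ?G] integral_entry[OF iG] intG intZd) (simp add: scaleR_conv_of_real)
  qed
  have off: "i \<noteq> j \<Longrightarrow> A0 ?G $ i $ j = A0 ?Z $ i $ j" for i j
    by (simp add: A0_eq[of ?G] A0_eq[of ?Z] integral_entry[OF iG] intG ee_off)
  have "(norm (A0 ?G))^2 = (cmod (?K$Pl$Pl))^2 + (cmod (?K$Mi$Mi))^2 + ((cmod (A0 ?Z $Pl$Mi))^2 + (cmod (A0 ?Z $Mi$Pl))^2)"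
    by (simp add: norm_sq_pm diag off)
  also have "\<dots> \<le> \<mu> * (norm ?m)^2 + (norm (A0 ?Z))^2"
  proof -
    have h: "(cmod (A0 ?Z $Pl$Mi))^2 + (cmod (A0 ?Z $Mi$Pl))^2 \<le> (norm (A0 ?Z))^2"
      unfolding norm_sq_pm[of "A0 ?Z"]
      using zero_le_power2[of "cmod (A0 ?Z $Pl$Pl)"] zero_le_power2[of "cmod (A0 ?Z $Mi$Mi)"] by linarith
    show ?thesis using Td[OF tr] h by linarith
  qed
  finally have X: "(norm (A0 ?G))^2 \<le> \<mu> * (norm ?m)^2 + (norm (A0 ?Z))^2" .
  have "2*pi*(norm (A0 ?G))^2 \<le> 2*pi*(\<mu> * (norm ?m)^2 + (norm (A0 ?Z))^2)"
    using X by (intro mult_left_mono) auto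
  then have "2*pi*(norm (A0 ?G))^2 \<le> 2*pi*(\<mu> * (norm ?m)^2) + 2*pi*(norm (A0 ?Z))^2"
    by (simp only: distrib_left)
  also have "2*pi*(norm (A0 ?Z))^2 \<le> NN ?Z" by (rule jensen[OF Zf(1)])
  also have "NN ?Z = \<rho>^2 * NN (\<lambda>p. A p - ?m)" using Zf(2) Yf(3) by simp
  finally show ?thesis by (simp add: algebra_simps)
qed

lemma main_abs:
  "\<exists>c<1. \<forall>A \<in> (Tspace :: mfun set). tinner one_T A = 0 \<longrightarrow> tnorm (W (W A)) \<le> c * tnorm A"
proof -
  define t where "t = \<rho>^2"
  define \<kappa> where "\<kappa> = (1 - t) * \<mu> + t"
  have t: "0 \<le> t" "t < 1" using rho by (auto simp: t_def power_less_one_iff)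
  have "(1 - t) * \<mu> < (1 - t) * 1" using t mu by (intro mult_strict_left_mono) auto
  then have k1: "\<kappa> < 1" unfolding \<kappa>_def by simp
  have k0: "t \<le> \<kappa>" using t mu unfolding \<kappa>_def by simp
  show ?thesis
  proof (intro exI[of _ "sqrt \<kappa>"] conjI ballI impI)
    show "sqrt \<kappa> < 1" using k1 by simp
    fix A :: mfun assume AT: "A \<in> Tspace" and perp: "tinner one_T A = 0"
    have A: "L2 A" by (rule Tspace_L2[OF AT])
    have tr: "mtrace (A0 A) = 0" by (rule perp_trace[OF A perp])
    define G where "G = W A"
    have G: "L2 G" unfolding G_def by (rule wstep(1)[OF A])
    define a where "a = 2*pi*(norm (A0 A))^2"
    define b where "b = NN (\<lambda>p. A p - A0 A)"
    define x where "x = 2*pi*(norm (A0 G))^2"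
    define g where "g = NN G"
    have b0: "0 \<le> b" unfolding b_def by (rule NN_nonneg)
    have a0: "0 \<le> a" unfolding a_def by simp
    have NA: "NN A = a + b" unfolding a_def b_def by (rule mean_split(3)[OF A])
    have gx: "NN (\<lambda>p. G p - A0 G) = g - x" using mean_split(3)[OF G] unfolding g_def x_def by simp
    have Tle: "(norm (Tch nu m))^2 \<le> (norm m)^2" for m
      using Tn[of m] by (simp add: power_mono)
    have NH: "NN (W G) \<le> x + t * (g - x)"
      using wstep(2)[OF G] Tle[of "A0 G"] unfolding gx t_def x_def by simp
    have gb: "g \<le> a + t * b"
      using wstep(2)[OF A] Tle[of "A0 A"] unfolding g_def G_def a_def b_def t_def by simp
    have xb: "x \<le> \<mu> * a + t * b"
      using Cbound[OF A tr] unfolding x_def G_def a_def b_def t_def by (simp add: algebra_simps)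
    have "x + t * (g - x) = (1 - t) * x + t * g" by (simp add: algebra_simps)
    also have "\<dots> \<le> (1 - t) * (\<mu> * a + t * b) + t * (a + t * b)"
      using xb gb t by (intro add_mono mult_left_mono) auto
    also have "\<dots> = \<kappa> * a + t * b" unfolding \<kappa>_def by (simp add: algebra_simps)
    also have "\<dots> \<le> \<kappa> * a + \<kappa> * b" using k0 b0 by (simp add: mult_right_mono)
    finally have "NN (W (W A)) \<le> \<kappa> * NN A" using NH NA unfolding G_def by (simp add: algebra_simps)
    then have "NN (W (W A)) / (4*pi) \<le> \<kappa> * (NN A / (4*pi))"
      by (simp add: divide_right_mono)
    then have "sqrt (NN (W (W A)) / (4*pi)) \<le> sqrt \<kappa> * sqrt (NN A / (4*pi))"
      by (metis real_sqrt_le_mono real_sqrt_mult)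
    then show "tnorm (W (W A)) \<le> sqrt \<kappa> * tnorm A" by (simp add: tnorm_eq)
  qed
qed

end


locale gs = fixes r0 \<sigma> :: real
begin

abbreviation "f \<equiv> gauss_density r0 \<sigma>"
abbreviation "N \<equiv> gauss_N r0 \<sigma>"
abbreviation "D \<equiv> density lborel (\<lambda>r. ennreal (f r))"
abbreviation "nu \<equiv> nu_gauss r0 \<sigma>"
abbreviation "ex r \<equiv> exp (- (r - r0)\<^sup>2 / \<sigma>\<^sup>2)"

lemma ex_cont: "continuous_on S (\<lambda>r. ex r)"
  unfolding divide_inverse by (intro continuous_intros)

lemma int_ex: "integrable lborel (\<lambda>r. indicator {r0-pi..r0+pi} r * ex r)"
  using borel_integrable_compact[of "{r0-pi..r0+pi}" "\<lambda>r. ex r", OF compact_Icc ex_cont]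
  by simp

lemma N_eq: "N = integral\<^sup>L lborel (\<lambda>r. indicator {r0-pi..r0+pi} r * ex r)"
proof -
  have "N = (LBINT r:{r0-pi..r0+pi}. ex r)"
    unfolding gauss_N_def by (rule interval_integral_Icc) simp
  then show ?thesis by (simp add: set_lebesgue_integral_def)
qed

lemma N_nonneg: "0 \<le> N"
  unfolding N_eq by (rule integral_nonneg_AE) (simp add: indicator_def)

lemma f_nonneg: "0 \<le> f r"
  using N_nonneg by (simp add: gauss_density_def indicator_def)

lemma f_meas[measurable]: "f \<in> borel_measurable borel"
proof -
  have "(\<lambda>r::real. ex r) \<in> borel_measurable borel" by (rule borel_measurable_continuous_onI[OF ex_cont])
  then show ?thesis unfolding gauss_density_def by (intro borel_measurable_divide borel_measurable_times) auto
qed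

lemma f_int: "integrable lborel f"
  unfolding gauss_density_def using int_ex by (intro integrable_divide_zero) simp

lemma f_integral: "integral\<^sup>L lborel f = N / N"
  unfolding gauss_density_def using N_eq by simp

lemma emeasure_D: "emeasure D (space D) = ennreal (N / N)"
proof -
  have "emeasure D (space D) = (\<integral>\<^sup>+ x. ennreal (f x) \<partial>lborel)"
    by (simp add: emeasure_density)
  also have "\<dots> = ennreal (integral\<^sup>L lborel f)"
    by (rule nn_integral_eq_integral[OF f_int]) (simp add: f_nonneg)
  finally show ?thesis by (simp add: f_integral)
qed

lemma measure_D: "measure D (space D) = N / N"
  using emeasure_D N_nonneg by (simp add: measure_def)

lemma measure_D_le: "measure D (space D) \<le> 1"
  unfolding measure_D by (cases "N = 0") simp_all

sublocale Df: finite_measure D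
  by (rule finite_measureI) (use emeasure_D in simp)

lemma integral_D: "g \<in> borel_measurable borel \<Longrightarrow> integral\<^sup>L D (g :: real \<Rightarrow> 'b::{banach,second_countable_topology}) = integral\<^sup>L lborel (\<lambda>r. f r *\<^sub>R g r)"
  by (rule integral_density) (simp_all add: f_nonneg)

lemma int_D: "continuous_on UNIV g \<Longrightarrow> (\<And>r. norm (g r) \<le> B) \<Longrightarrow> integrable D (g :: real \<Rightarrow> 'b::{banach,second_countable_topology})"
  by (rule Df.integrable_const_bound[where B=B]) (simp_all add: borel_measurable_continuous_onI)

lemma Ur_cont: "continuous_on UNIV Ur"
  unfolding Ur_def
proof (intro continuous_on_vec_lambda)
  fix i j :: pm
  show "continuous_on UNIV (\<lambda>r. if i = Pl \<and> j = Pl then complex_of_real (cos r)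
                 else if i = Mi \<and> j = Mi then complex_of_real (- cos r)
                 else complex_of_real (sin r))"
    by (cases i; cases j) (simp_all add: continuous_intros)
qed

lemma Ur_meas[measurable]: "Ur \<in> borel_measurable borel"
  by (rule borel_measurable_continuous_onI[OF Ur_cont])

lemma Ur_nth: "Ur r $ Pl $ Pl = of_real (cos r)" "Ur r $ Pl $ Mi = of_real (sin r)"
   "Ur r $ Mi $ Pl = of_real (sin r)" "Ur r $ Mi $ Mi = - of_real (cos r)"
  by (simp_all add: Ur_def)

lemma Ur_unit: "Ur r ** adj (Ur r) = mat 1"
proof -
  have cs: "complex_of_real (cos r) * complex_of_real (cos r) + complex_of_real (sin r) * complex_of_real (sin r) = 1"
    by (simp flip: of_real_mult of_real_add)
  have e: "(Ur r ** adj (Ur r)) $ i $ j = mat 1 $ i $ j" for i j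
    apply (cases i; cases j)
       apply (simp_all only: matrix_matrix_mult_def sum_pm adj_def vec_lambda_beta Ur_nth mat_def pm.distinct simp_thms if_True if_False complex_cnj_complex_of_real complex_cnj_minus)
    using cs by (simp_all add: algebra_simps)
  show ?thesis by (simp add: vec_eq_iff e)
qed

lemma norm_Ur: "norm (Ur r) \<le> 2"
proof -
  have "(norm (Ur r))^2 = 2" by (simp add: norm_sq_pm Ur_nth)
  then have "norm (Ur r) = sqrt 2" by (metis norm_ge_zero real_sqrt_unique)
  also have "sqrt 2 \<le> sqrt 4" by (rule real_sqrt_le_mono) simp
  finally show ?thesis by simp
qed

lemma Ur_measD: "Ur \<in> measurable D borel"
  unfolding measurable_density_eq1 using Ur_meas by simp

lemma integral_nu: "g \<in> borel_measurable borel \<Longrightarrow> integral\<^sup>L nu (g :: _ \<Rightarrow> 'b::{banach,second_countable_topology}) = integral\<^sup>L D (\<lambda>r. g (Ur r))"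
  unfolding nu_gauss_def by (rule integral_distr[OF Ur_measD])

end


context gs begin

definition Ec :: "real \<Rightarrow> real" where "Ec k = integral\<^sup>L D (\<lambda>r. cos (k * r))"
definition Es :: "real \<Rightarrow> real" where "Es k = integral\<^sup>L D (\<lambda>r. sin (k * r))"

lemma int_cos: "integrable D (\<lambda>r. cos (k * r))"
  by (rule int_D[where B=1]) (simp_all add: continuous_intros)
lemma int_sin: "integrable D (\<lambda>r. sin (k * r))"
  by (rule int_D[where B=1]) (simp_all add: continuous_intros)

lemma int_Ur: "integrable D Ur"
  by (rule int_D[OF Ur_cont norm_Ur])

lemma Utilde_eq: "Utilde nu = integral\<^sup>L D Ur"
  unfolding Utilde_def by (subst integral_nu) simp_all

lemma Utilde_nth: "Utilde nu $ Pl $ Pl = of_real (Ec 1)" "Utilde nu $ Pl $ Mi = of_real (Es 1)"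
   "Utilde nu $ Mi $ Pl = of_real (Es 1)" "Utilde nu $ Mi $ Mi = - of_real (Ec 1)"
  by (simp_all add: Utilde_eq integral_entry[OF int_Ur] Ur_nth Ec_def Es_def)

lemma U1: "Utilde nu ** adj (Utilde nu) = mat (of_real ((Ec 1)^2 + (Es 1)^2))"
proof -
  let ?c = "complex_of_real (Ec 1)" and ?s = "complex_of_real (Es 1)"
  have cs: "?c * ?c + ?s * ?s = complex_of_real ((Ec 1)^2 + (Es 1)^2)"
    by (simp add: power2_eq_square)
  have e: "(Utilde nu ** adj (Utilde nu)) $ i $ j = mat (of_real ((Ec 1)^2 + (Es 1)^2)) $ i $ j" for i j
    apply (cases i; cases j)
       apply (simp_all only: matrix_matrix_mult_def sum_pm adj_def vec_lambda_beta Utilde_nth mat_def pm.distinct simp_thms if_True if_False complex_cnj_complex_of_real complex_cnj_minus)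
    using cs by (simp_all add: algebra_simps)
  show ?thesis by (simp add: vec_eq_iff e)
qed

lemma conj_meas: "(\<lambda>U::complex^pm^pm. adj U ** X ** U) \<in> borel_measurable borel"
  by (intro meas_mult meas_adj measurable_ident_sets measurable_const) auto

lemma Tch_eq: "Tch nu X = integral\<^sup>L D (\<lambda>r. adj (Ur r) ** X ** Ur r)"
  unfolding Tch_def by (rule integral_nu[OF conj_meas])

lemma Tn: "norm (Tch nu X) \<le> norm X"
proof -
  have "norm (Tch nu X) \<le> integral\<^sup>L D (\<lambda>r. norm (adj (Ur r) ** X ** Ur r))"
    unfolding Tch_eq by (rule integral_norm_bound)
  also have "\<dots> = measure D (space D) * norm X"
    by (simp add: norm_conj1[OF Ur_unit])
  also have "\<dots> \<le> 1 * norm X"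
    by (rule mult_right_mono[OF measure_D_le]) simp
  finally show ?thesis by simp
qed

lemma entryPP: "X $ Mi $ Mi = - X $ Pl $ Pl \<Longrightarrow>
  (adj (Ur r) ** X ** Ur r) $ Pl $ Pl = X $ Pl $ Pl * of_real (cos (2 * r)) + ((X $ Pl $ Mi + X $ Mi $ Pl) / 2) * of_real (sin (2 * r))"
  unfolding cos_double sin_double by (simp add: matrix_matrix_mult_def sum_pm adj_def Ur_nth power2_eq_square field_simps)

lemma entryMM: "X $ Mi $ Mi = - X $ Pl $ Pl \<Longrightarrow>
  (adj (Ur r) ** X ** Ur r) $ Mi $ Mi = - (X $ Pl $ Pl * of_real (cos (2 * r)) + ((X $ Pl $ Mi + X $ Mi $ Pl) / 2) * of_real (sin (2 * r)))"
  unfolding cos_double sin_double by (simp add: matrix_matrix_mult_def sum_pm adj_def Ur_nth power2_eq_square field_simps)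

end


lemma cs_ineq: "(u * g + v * d)^2 \<le> (g^2 + d^2) * (u^2 + v^2)" for u v g d :: real
proof -
  have "0 \<le> (u * d - v * g)^2" by simp
  then show ?thesis by (simp add: power2_eq_square algebra_simps)
qed

context gs begin

lemma Td:
  assumes tr: "mtrace X = 0"
  shows "(cmod (Tch nu X $Pl$Pl))^2 + (cmod (Tch nu X $Mi$Mi))^2 \<le> ((Ec 2)^2 + (Es 2)^2) * (norm X)^2"
proof -
  let ?a = "X $ Pl $ Pl" and ?b = "X $ Pl $ Mi" and ?e = "X $ Mi $ Pl"
  let ?h = "(?b + ?e) / 2"
  have XM: "X $ Mi $ Mi = - ?a" using tr by (simp add: mtrace_def sum_pm eq_neg_iff_add_eq_0 add.commute)
  have mc: "(\<lambda>r. adj (Ur r) ** X ** Ur r) \<in> borel_measurable D"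
    using measurable_compose[OF Ur_measD conj_meas] by simp
  have ic: "integrable D (\<lambda>r. adj (Ur r) ** X ** Ur r)"
    by (rule Df.integrable_const_bound[where B="norm X"]) (simp_all add: norm_conj1[OF Ur_unit] mc)
  have i1: "integrable D (\<lambda>r. ?a * complex_of_real (cos (2 * r)))"
    by (rule int_D[where B="cmod ?a"]) (simp_all add: continuous_intros norm_mult mult_left_le)
  have i2: "integrable D (\<lambda>r. ?h * complex_of_real (sin (2 * r)))"
    by (rule int_D[where B="cmod ?h"]) (simp_all add: continuous_intros norm_mult mult_left_le)
  define z where "z = ?a * of_real (Ec 2) + ?h * of_real (Es 2)"
  have w: "integral\<^sup>L D (\<lambda>r. ?a * complex_of_real (cos (2 * r)) + ?h * complex_of_real (sin (2 * r))) = z"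
    unfolding z_def using i1 i2 by (simp add: integral_add Ec_def Es_def)
  have TP: "Tch nu X $ Pl $ Pl = z"
    unfolding Tch_eq integral_entry[OF ic] entryPP[OF XM] w ..
  have TM: "Tch nu X $ Mi $ Mi = - z"
    unfolding Tch_eq integral_entry[OF ic] entryMM[OF XM] integral_minus w ..
  have nX: "(norm X)^2 = 2 * (cmod ?a)^2 + (cmod ?b)^2 + (cmod ?e)^2"
    by (simp add: norm_sq_pm XM)
  have zle: "cmod z \<le> cmod ?a * \<bar>Ec 2\<bar> + cmod ?h * \<bar>Es 2\<bar>"
    unfolding z_def by (rule order_trans[OF norm_triangle_ineq]) (simp add: norm_mult)
  have "(cmod z)^2 \<le> (cmod ?a * \<bar>Ec 2\<bar> + cmod ?h * \<bar>Es 2\<bar>)^2"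
    using zle by (simp add: power_mono)
  also have "\<dots> \<le> ((Ec 2)^2 + (Es 2)^2) * ((cmod ?a)^2 + (cmod ?h)^2)"
    using cs_ineq[of "cmod ?a" "\<bar>Ec 2\<bar>" "cmod ?h" "\<bar>Es 2\<bar>"] by simp
  finally have z2: "(cmod z)^2 \<le> ((Ec 2)^2 + (Es 2)^2) * ((cmod ?a)^2 + (cmod ?h)^2)" .
  have "cmod ?h \<le> (cmod ?b + cmod ?e) / 2"
    using norm_triangle_ineq[of ?b ?e] by (simp add: norm_divide)
  then have "(cmod ?h)^2 \<le> ((cmod ?b + cmod ?e) / 2)^2" by (simp add: power_mono)
  also have "\<dots> \<le> ((cmod ?b)^2 + (cmod ?e)^2) / 2"
    using cs_ineq[of "cmod ?b" 1 "cmod ?e" 1] by (simp add: power_divide)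
  finally have h2: "2 * ((cmod ?a)^2 + (cmod ?h)^2) \<le> (norm X)^2" using nX by simp
  have m0: "0 \<le> (Ec 2)^2 + (Es 2)^2" by simp
  have "(cmod (Tch nu X $Pl$Pl))^2 + (cmod (Tch nu X $Mi$Mi))^2 = 2 * (cmod z)^2"
    by (simp add: TP TM)
  also have "\<dots> \<le> ((Ec 2)^2 + (Es 2)^2) * (2 * ((cmod ?a)^2 + (cmod ?h)^2))"
    using mult_left_mono[OF z2, of 2] by (simp add: algebra_simps)
  also have "\<dots> \<le> ((Ec 2)^2 + (Es 2)^2) * (norm X)^2"
    by (rule mult_left_mono[OF h2 m0])
  finally show ?thesis .
qed

end


context gs begin

lemma strict:
  assumes k: "1 \<le> k"
  shows "(Ec k)^2 + (Es k)^2 < 1"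
proof (cases "N = 0")
  case True
  then have "f r = 0" for r by (simp add: gauss_density_def)
  then have "integral\<^sup>L D g = 0" if "g \<in> borel_measurable borel" for g :: "real \<Rightarrow> real"
    using integral_D[OF that] by simp
  then show ?thesis by (simp add: Ec_def Es_def)
next
  case False
  then have Npos: "0 < N" using N_nonneg by simp
  have mD: "measure D (space D) = 1" using False measure_D by simp
  let ?c = "Ec k" and ?s = "Es k"
  show ?thesis
  proof (rule ccontr)
    assume "\<not> ?thesis"
    then have ge: "1 \<le> ?c^2 + ?s^2" by simp
    define \<rho> where "\<rho> = sqrt (?c^2 + ?s^2)"
    have \<rho>1: "1 \<le> \<rho>" unfolding \<rho>_def using ge by simp
    have \<rho>sq: "\<rho>^2 = ?c^2 + ?s^2" unfolding \<rho>_def by simp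
    define g where "g r = \<rho> - (?c * cos (k * r) + ?s * sin (k * r))" for r
    have gnn: "0 \<le> g r" for r
    proof -
      have "(cos (k*r) * ?c + sin (k*r) * ?s)^2 \<le> (?c^2 + ?s^2) * ((cos (k*r))^2 + (sin (k*r))^2)"
        by (rule cs_ineq)
      then have "(?c * cos (k*r) + ?s * sin (k*r))^2 \<le> \<rho>^2" by (simp add: \<rho>sq mult.commute)
      then have "?c * cos (k*r) + ?s * sin (k*r) \<le> \<rho>" by (rule power2_le_imp_le) (use \<rho>1 in simp)
      then show ?thesis by (simp add: g_def)
    qed
    have gcont: "continuous_on UNIV g" unfolding g_def by (intro continuous_intros)
    have ig: "integrable D g"
      unfolding g_def using int_cos[of k] int_sin[of k] by simp
    have "integral\<^sup>L D g = \<rho> * measure D (space D) - (?c * ?c + ?s * ?s)"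
      unfolding g_def using int_cos[of k] int_sin[of k]
      by (simp add: integral_diff integral_add Ec_def Es_def)
    also have "\<dots> = \<rho> - \<rho>^2" using mD \<rho>sq by (simp add: power2_eq_square)
    also have "\<dots> \<le> 0" using \<rho>1 by (simp add: power2_eq_square)
    finally have "integral\<^sup>L D g \<le> 0" .
    moreover have "0 \<le> integral\<^sup>L D g" by (rule integral_nonneg_AE) (simp add: gnn)
    ultimately have "integral\<^sup>L D g = 0" by simp
    then have "AE r in D. g r = 0"
      using integral_nonneg_eq_0_iff_AE[OF ig] gnn by simp
    then have AEl: "AE r in lborel. 0 < f r \<longrightarrow> g r = 0"
      by (subst (asm) AE_density) simp_all
    define x1 where "x1 = r0 - pi / (2 * k)"
    define x2 where "x2 = r0 + pi / (2 * k)"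
    have kx: "k * x2 = k * x1 + pi" using k unfolding x1_def x2_def by (simp add: field_simps)
    have "g x1 + g x2 = 2 * \<rho>" unfolding g_def kx by simp
    then have "0 < g x1 \<or> 0 < g x2" using \<rho>1 by linarith
    then obtain x0 where gx0: "0 < g x0" and x0: "x0 = x1 \<or> x0 = x2" by blast
    have pk: "pi / (2 * k) < pi" using k by (simp add: field_simps pi_gt_zero)
    have pk0: "0 < pi / (2 * k)" using k by simp
    define Os where "Os = {y. 0 < g y} \<inter> {r0 - pi <..< r0 + pi}"
    have oO: "open Os" unfolding Os_def
      by (intro open_Int open_Collect_less continuous_intros gcont)
    have "r0 - pi < x0 \<and> x0 < r0 + pi" using x0 pk pk0 unfolding x1_def x2_def by auto
    then have "x0 \<in> Os" unfolding Os_def using gx0 by simp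
    then obtain e where e: "0 < e" "ball x0 e \<subseteq> Os" using oO by (meson openE)
    have Osub: "Os \<subseteq> {y \<in> space lborel. \<not> (0 < f y \<longrightarrow> g y = 0)}"
    proof
      fix y assume "y \<in> Os"
      then have "0 < g y" "y \<in> {r0 - pi..r0 + pi}" unfolding Os_def by auto
      then show "y \<in> {y \<in> space lborel. \<not> (0 < f y \<longrightarrow> g y = 0)}"
      proof -
        have "f y = ex y / N" using \<open>y \<in> {r0 - pi..r0 + pi}\<close> by (simp add: gauss_density_def)
        then have "0 < f y" using Npos by simp
        then show ?thesis using \<open>0 < g y\<close> by simp
      qed
    qed
    from AEl obtain Nn where Nn: "{y \<in> space lborel. \<not> (0 < f y \<longrightarrow> g y = 0)} \<subseteq> Nn" "emeasure lborel Nn = 0" "Nn \<in> sets lborel"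
      by (rule AE_E)
    have "ball x0 e = {x0 - e <..< x0 + e}" by (auto simp: dist_real_def abs_less_iff)
    then have "emeasure lborel (ball x0 e) = ennreal (2 * e)" using e by simp
    moreover have "emeasure lborel (ball x0 e) \<le> emeasure lborel Nn"
      using e(2) Osub Nn(1) by (intro emeasure_mono Nn(3)) auto
    ultimately show False using Nn(2) e(1) by simp
  qed
qed

end


theorem lemma3:
  fixes r0 \<sigma> :: real
  assumes "\<sigma> > 0"
  shows "strictly_contractive_perp
           (\<lambda>A :: real^1 \<Rightarrow> complex^pm^pm.
              walkW (nu_gauss r0 \<sigma>) vpm (walkW (nu_gauss r0 \<sigma>) vpm A))"
proof -
  interpret g: gs r0 \<sigma> .
  interpret w: whyp "nu_gauss r0 \<sigma>" "(g.Ec 1)^2 + (g.Es 1)^2" "(g.Ec 2)^2 + (g.Es 2)^2"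
  proof
    show "Utilde (nu_gauss r0 \<sigma>) ** adj (Utilde (nu_gauss r0 \<sigma>)) = mat (complex_of_real ((g.Ec 1)^2 + (g.Es 1)^2))"
      by (rule g.U1)
    show "0 \<le> (g.Ec 1)^2 + (g.Es 1)^2" by simp
    show "(g.Ec 1)^2 + (g.Es 1)^2 < 1" by (rule g.strict) simp
    show "norm (Tch (nu_gauss r0 \<sigma>) X) \<le> norm X" for X by (rule g.Tn)
    show "mtrace X = 0 \<Longrightarrow> (cmod (Tch (nu_gauss r0 \<sigma>) X $ Pl $ Pl))^2 + (cmod (Tch (nu_gauss r0 \<sigma>) X $ Mi $ Mi))^2
           \<le> ((g.Ec 2)^2 + (g.Es 2)^2) * (norm X)^2" for X by (rule g.Td)
    show "0 \<le> (g.Ec 2)^2 + (g.Es 2)^2" by simp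
    show "(g.Ec 2)^2 + (g.Es 2)^2 < 1" by (rule g.strict) simp
  qed
  show ?thesis unfolding strictly_contractive_perp_def using w.main_abs by simp
qed

end
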